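(* Let $L$ be an indexed language with threshold $l$, let $w\in L$ with a set of at least $l$ marked positions, and let $u_i$, $v_{i,j}$, $I$, $\phi$ be any factorization and map satisfying properties (1)–(4) of the threshold definition. Then for every $t\ge0$, the word $w^{(t)}$ has at least $t$ marked positions.
   Context: Indexed languages are the languages generated by indexed grammars (grammars whose nonterminals carry stacks of symbols that can be pushed, popped and copied to all nonterminals produced by a rule). An integer $l\ge0$ is a threshold for a language $L$ if for every $w\in L$ with a set of at least $l$ marked positions there are: (1) a factorization $w=u_1\cdots u_n$, $u_i=v_{i,1}\cdots v_{i,n_i}$, with $I=\{(i,j):1\le i\le n,1\le j\le n_i\}$; (2) a map $\phi:I\to\{1,\dots,n\}$ with $w^{(t)}\in L$ for all $t\ge0$, where $v^{(0)}_{i,j}=v_{i,j}$, $u_i^{(t)}=v_{i,1}^{(t)}\cdots v_{i,n_i}^{(t)}$, $v_{i,j}^{(t+1)}=u^{(t)}_{\phi(i,j)}$, $w^{(t)}=u_1^{(t)}\cdots u_n^{(t)}$; (3) if $v_{i,j}$ contains a marked position then so does $u_{\phi(i,j)}$; (4) some $(\mathbf i,\mathbf j)\in I$ has $\phi(\mathbf i,\mathbf j)=\mathbf i$ and $u_{\mathbf i}$ has a marked position outside $v_{\mathbf i,\mathbf j}$. (Every indexed language has a threshold.) Marked positions of $w^{(t)}$: introduce a symbol $x_{i,j}$ for each $(i,j)\in I$, the morphism $h(x_{i,j})=x_{\phi(i,j),1}\cdots x_{\phi(i,j),n_{\phi(i,j)}}$ and $X=x_{1,1}\cdots x_{1,n_1}\cdots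 x_{n,1}\cdots x_{n,n_n}$; then $w^{(t)}$ is obtained from $h^t(X)$ by replacing each occurrence of $x_{i,j}$ by a copy of $v_{i,j}$, and a position of $w^{(t)}$ is marked iff it lies in such a copy of some $v_{i,j}$ at a position corresponding to a marked position of $w$ inside $v_{i,j}$. *)

theory Defs
  imports Main
begin

text \<open>Sentential-form symbols: a terminal, or a nonterminal carrying a stack of
flags (head of the list = top of the stack).\<close>
datatype ('n, 't, 'f) sf_sym = Tm 't | Nt 'n "'f list"

text \<open>Productions (Aho's forms):
  Copy A alpha : A -> alpha, the stack of A is copied to every nonterminal of alpha;
  Push A B f   : A -> B f, push flag f;
  Pop A f alpha: A f -> alpha, pop f and copy the remaining stack to every nonterminal of alpha.\<close>
datatype ('n, 't, 'f) iprod =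
    Copy 'n "('n + 't) list"
  | Push 'n 'n 'f
  | Pop 'n 'f "('n + 't) list"

fun inst :: "'f list \<Rightarrow> ('n + 't) \<Rightarrow> ('n, 't, 'f) sf_sym" where
  "inst \<sigma> (Inl B) = Nt B \<sigma>"
| "inst \<sigma> (Inr a) = Tm a"

inductive istep :: "('n, 't, 'f) iprod set \<Rightarrow> ('n, 't, 'f) sf_sym list \<Rightarrow> ('n, 't, 'f) sf_sym list \<Rightarrow> bool"
  for P where
  copy: "Copy A \<alpha> \<in> P \<Longrightarrow> istep P (x @ [Nt A \<sigma>] @ y) (x @ map (inst \<sigma>) \<alpha> @ y)"
| push: "Push A B f \<in> P \<Longrightarrow> istep P (x @ [Nt A \<sigma>] @ y) (x @ [Nt B (f # \<sigma>)] @ y)"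
| pop:  "Pop A f \<alpha> \<in> P \<Longrightarrow> istep P (x @ [Nt A (f # \<sigma>)] @ y) (x @ map (inst \<sigma>) \<alpha> @ y)"

definition ilang :: "('n, 't, 'f) iprod set \<Rightarrow> 'n \<Rightarrow> 't list set" where
  "ilang P S = {w. (istep P)\<^sup>*\<^sup>* [Nt S []] (map Tm w)}"

definition indexed_language :: "'t list set \<Rightarrow> bool" where
  "indexed_language L \<longleftrightarrow>
     (\<exists>(P :: (nat, 't, nat) iprod set) S. finite P \<and> L = ilang P S)"

section \<open>Factorizations and their iteration (indices are 0-based)\<close>

definition Iset :: "nat \<Rightarrow> (nat \<Rightarrow> nat) \<Rightarrow> (nat \<times> nat) set" where
  "Iset n nn = {(i, j). i < n \<and> j < nn i}"

definition ufac :: "(nat \<Rightarrow> nat) \<Rightarrow> (nat \<Rightarrow> nat \<Rightarrow> 'a list) \<Rightarrow> nat \<Rightarrow> 'a list" where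
  "ufac nn v i = concat (map (v i) [0..<nn i])"

fun viter :: "(nat \<Rightarrow> nat) \<Rightarrow> (nat \<Rightarrow> nat \<Rightarrow> 'a list) \<Rightarrow> (nat \<Rightarrow> nat \<Rightarrow> nat)
               \<Rightarrow> nat \<Rightarrow> nat \<Rightarrow> nat \<Rightarrow> 'a list" where
  "viter nn v \<phi> 0 i j = v i j"
| "viter nn v \<phi> (Suc t) i j = ufac nn (viter nn v \<phi> t) (\<phi> i j)"

definition witer :: "nat \<Rightarrow> (nat \<Rightarrow> nat) \<Rightarrow> (nat \<Rightarrow> nat \<Rightarrow> 'a list) \<Rightarrow> (nat \<Rightarrow> nat \<Rightarrow> nat)
               \<Rightarrow> nat \<Rightarrow> 'a list" where
  "witer n nn v \<phi> t = concat (map (ufac nn (viter nn v \<phi> t)) [0..<n])"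

definition uoff :: "(nat \<Rightarrow> nat) \<Rightarrow> (nat \<Rightarrow> nat \<Rightarrow> 'a list) \<Rightarrow> nat \<Rightarrow> nat" where
  "uoff nn v i = length (concat (map (ufac nn v) [0..<i]))"

definition voff_in_u :: "(nat \<Rightarrow> nat \<Rightarrow> 'a list) \<Rightarrow> nat \<Rightarrow> nat \<Rightarrow> nat" where
  "voff_in_u v i j = length (concat (map (v i) [0..<j]))"

definition voff :: "(nat \<Rightarrow> nat) \<Rightarrow> (nat \<Rightarrow> nat \<Rightarrow> 'a list) \<Rightarrow> nat \<Rightarrow> nat \<Rightarrow> nat" where
  "voff nn v i j = uoff nn v i + voff_in_u v i j"

definition threshold_props ::
  "'a list set \<Rightarrow> 'a list \<Rightarrow> nat set \<Rightarrow> nat \<Rightarrow> (nat \<Rightarrow> nat) \<Rightarrow> (nat \<Rightarrow> nat \<Rightarrow> 'a list)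
   \<Rightarrow> (nat \<Rightarrow> nat \<Rightarrow> nat) \<Rightarrow> bool" where
  "threshold_props L w M n nn v \<phi> \<longleftrightarrow>
     \<comment> \<open>(1)\<close>
     w = concat (map (ufac nn v) [0..<n]) \<and>
     \<comment> \<open>(2)\<close>
     (\<forall>(i, j) \<in> Iset n nn. \<phi> i j < n) \<and>
     (\<forall>t. witer n nn v \<phi> t \<in> L) \<and>
     \<comment> \<open>(3)\<close>
     (\<forall>(i, j) \<in> Iset n nn.
        (\<exists>r < length (v i j). voff nn v i j + r \<in> M) \<longrightarrow>
        (\<exists>r < length (ufac nn v (\<phi> i j)). uoff nn v (\<phi> i j) + r \<in> M)) \<and>
     \<comment> \<open>(4)\<close>
     (\<exists>(i, j) \<in> Iset n nn. \<phi> i j = i \<and>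
        (\<exists>r < length (ufac nn v i). uoff nn v i + r \<in> M \<and>
            (r < voff_in_u v i j \<or> voff_in_u v i j + length (v i j) \<le> r)))"

definition is_threshold :: "'a list set \<Rightarrow> nat \<Rightarrow> bool" where
  "is_threshold L l \<longleftrightarrow>
     (\<forall>w \<in> L. \<forall>M. M \<subseteq> {..<length w} \<and> l \<le> card M \<longrightarrow>
        (\<exists>n nn v \<phi>. threshold_props L w M n nn v \<phi>))"

text \<open>Symbols x_{i,j} are represented by the pairs (i,j).\<close>
definition hmor :: "(nat \<Rightarrow> nat) \<Rightarrow> (nat \<Rightarrow> nat \<Rightarrow> nat) \<Rightarrow> nat \<times> nat \<Rightarrow> (nat \<times> nat) list" where
  "hmor nn \<phi> x = (let k = \<phi> (fst x) (snd x) in map (\<lambda>j. (k, j)) [0..<nn k])"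

definition Xword :: "nat \<Rightarrow> (nat \<Rightarrow> nat) \<Rightarrow> (nat \<times> nat) list" where
  "Xword n nn = concat (map (\<lambda>i. map (\<lambda>j. (i, j)) [0..<nn i]) [0..<n])"

definition hpow :: "nat \<Rightarrow> (nat \<Rightarrow> nat) \<Rightarrow> (nat \<Rightarrow> nat \<Rightarrow> nat) \<Rightarrow> nat \<Rightarrow> (nat \<times> nat) list" where
  "hpow n nn \<phi> t = ((\<lambda>xs. concat (map (hmor nn \<phi>) xs)) ^^ t) (Xword n nn)"

text \<open>Positions of w^{(t)} (= the word obtained from h^t(X) by replacing each x_{i,j}
by v_{i,j}) that are marked: position p lies in the copy of v_{i,j} substituted for the
q-th letter of h^t(X), at offset r, and position r of v_{i,j} is marked in w.\<close>
definition marked_iter ::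
  "nat \<Rightarrow> (nat \<Rightarrow> nat) \<Rightarrow> (nat \<Rightarrow> nat \<Rightarrow> 'a list) \<Rightarrow> (nat \<Rightarrow> nat \<Rightarrow> nat) \<Rightarrow> nat set \<Rightarrow> nat \<Rightarrow> nat set" where
  "marked_iter n nn v \<phi> M t =
     (let xs = hpow n nn \<phi> t in
      {p. \<exists>q < length xs. \<exists>r < length (case_prod v (xs ! q)).
            p = length (concat (map (case_prod v) (take q xs))) + r \<and>
            voff nn v (fst (xs ! q)) (snd (xs ! q)) + r \<in> M})"

end

theory Submission imports Defs begin

lemma concat_pos:
  "r < length (concat ys) \<Longrightarrow> \<exists>j<length ys. \<exists>r'<length (ys!j). r = length (concat (take j ys)) + r'"
proof (induction ys arbitrary: r)
  case Nil then show ?case by simp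
next
  case (Cons y ys)
  show ?case
  proof (cases "r < length y")
    case True then show ?thesis by (intro exI[of _ 0]) auto
  next
    case False
    then have "r - length y < length (concat ys)" using Cons.prems by auto
    from Cons.IH[OF this] obtain j r' where "j < length ys" "r' < length (ys!j)"
      "r - length y = length (concat (take j ys)) + r'" by blast
    then show ?thesis using False by (intro exI[of _ "Suc j"]) auto
  qed
qed

lemma sum_two_le:
  fixes g :: "nat \<Rightarrow> nat"
  assumes "j < m" "j' < m" "j \<noteq> j'"
  shows "g j + g j' \<le> sum_list (map g [0..<m])"
proof -
  have "g j + g j' = sum g {j, j'}" using assms by simp
  also have "\<dots> \<le> sum g {0..<m}" by (rule sum_mono2) (use assms in auto)
  also have "\<dots> = sum_list (map g [0..<m])" by (simp add: interv_sum_list_conv_sum_set_nat)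
  finally show ?thesis .
qed

lemma sum_one_le:
  fixes g :: "nat \<Rightarrow> nat"
  assumes "j < m"
  shows "g j \<le> sum_list (map g [0..<m])"
  using assms by (intro member_le_sum_list) auto

lemma funpow_concat:
  fixes f :: "'a \<Rightarrow> 'a list"
  shows "((\<lambda>xs. concat (map f xs)) ^^ t) (concat xss) = concat (map ((\<lambda>xs. concat (map f xs)) ^^ t) xss)"
proof (induction t arbitrary: xss)
  case 0 then show ?case by simp
next
  case (Suc t)
  have "((\<lambda>xs. concat (map f xs)) ^^ Suc t) (concat xss) =
     ((\<lambda>xs. concat (map f xs)) ^^ t) (concat (map (\<lambda>xs. concat (map f xs)) xss))"
  proof -
    have e: "(\<lambda>xs. concat (map f xs)) (concat xss) = concat (map (\<lambda>xs. concat (map f xs)) xss)"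
      by (induction xss) auto
    show ?thesis by (simp only: funpow_Suc_right o_apply e)
  qed
  also have "\<dots> = concat (map ((\<lambda>xs. concat (map f xs)) ^^ Suc t) xss)"
    by (simp only: Suc.IH funpow_Suc_right map_map comp_def)
  finally show ?case .
qed

lemma take_off_mono:
  "q \<le> q' \<Longrightarrow> length (concat (map g (take q xs))) \<le> length (concat (map g (take q' xs)))"
proof -
  assume "q \<le> q'"
  have "take q' xs = take q xs @ drop q (take q' xs)"
    using append_take_drop_id[of q "take q' xs"] \<open>q \<le> q'\<close> by (simp add: min_def)
  then show ?thesis by (metis append.right_neutral concat_append length_append le_add1 map_append)
qed


lemma off_Suc:
  "q < length xs \<Longrightarrow> length (concat (map g (take (Suc q) xs))) = length (concat (map g (take q xs))) + length (g (xs!q))"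
  by (simp add: take_Suc_conv_app_nth)

lemma card_ge:
  fixes g :: "'b \<Rightarrow> 'c list"
  shows "length (filter (\<lambda>x. \<exists>r<length (g x). Q x r) xs) \<le>
     card {p. \<exists>q<length xs. \<exists>r<length (g (xs!q)). p = length (concat (map g (take q xs))) + r \<and> Q (xs!q) r}"
  (is "_ \<le> card ?B")
proof -
  define off where "off q = length (concat (map g (take q xs)))" for q
  define S where "S = {q. q < length xs \<and> (\<exists>r<length (g (xs!q)). Q (xs!q) r)}"
  define rr where "rr q = (SOME r. r<length (g (xs!q)) \<and> Q (xs!q) r)" for q
  define f where "f q = off q + rr q" for q
  have rr: "rr q < length (g (xs!q)) \<and> Q (xs!q) (rr q)" if "q \<in> S" for q
    using that unfolding S_def rr_def by (metis (mono_tags, lifting) mem_Collect_eq someI_ex)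
  have lt: "f q < off q'" if "q \<in> S" "q < q'" for q q'
  proof -
    have "f q < off (Suc q)" using rr[OF that(1)] that(1) off_Suc[of q xs g]
      unfolding f_def off_def S_def by auto
    also have "off (Suc q) \<le> off q'" unfolding off_def by (rule take_off_mono) (use that in auto)
    finally show ?thesis .
  qed
  have inj: "inj_on f S"
  proof (rule inj_onI)
    fix a b assume ab: "a \<in> S" "b \<in> S" "f a = f b"
    show "a = b"
    proof (rule ccontr)
      assume "a \<noteq> b"
      then consider "a < b" | "b < a" by linarith
      then show False
      proof cases
        case 1 then show False using lt[OF ab(1) 1] ab(3) unfolding f_def by simp
      next
        case 2 then show False using lt[OF ab(2) 2] ab(3) unfolding f_def by simp
      qed
    qed
  qed
  have sub: "f ` S \<subseteq> ?B"
  proof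
    fix p assume "p \<in> f ` S"
    then obtain q where q: "q \<in> S" "p = f q" by blast
    then show "p \<in> ?B" using rr[OF q(1)] unfolding f_def off_def S_def by blast
  qed
  have fin: "finite ?B"
  proof (rule finite_subset[of _ "{..<length (concat (map g xs))}"])
    show "?B \<subseteq> {..<length (concat (map g xs))}"
    proof
      fix p assume "p \<in> ?B"
      then obtain q r where qr: "q < length xs" "r < length (g (xs!q))"
        "p = length (concat (map g (take q xs))) + r" by blast
      have "p < length (concat (map g (take (Suc q) xs)))" using qr off_Suc[OF qr(1), of g] by simp
      also have "\<dots> \<le> length (concat (map g (take (length xs) xs)))"
        by (rule take_off_mono) (use qr in auto)
      finally show "p \<in> {..<length (concat (map g xs))}" by simp
    qed
  qed simp
  have "length (filter (\<lambda>x. \<exists>r<length (g x). Q x r) xs) = card S"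
    unfolding S_def by (simp add: length_filter_conv_card)
  also have "\<dots> \<le> card ?B" using card_inj_on_le[OF inj sub fin] .
  finally show ?thesis .
qed


theorem lemma2:
  fixes L :: "'a list set" and l :: nat and w :: "'a list" and M :: "nat set"
    and n :: nat and nn :: "nat \<Rightarrow> nat" and v :: "nat \<Rightarrow> nat \<Rightarrow> 'a list"
    and \<phi> :: "nat \<Rightarrow> nat \<Rightarrow> nat" and t :: nat
  assumes "indexed_language L"
    and "is_threshold L l"
    and "w \<in> L"
    and "M \<subseteq> {..<length w}"
    and "l \<le> card M"
    and "threshold_props L w M n nn v \<phi>"
  shows "t \<le> card (marked_iter n nn v \<phi> M t)"
proof -
  define H where "H = (\<lambda>xs. concat (map (hmor nn \<phi>) xs))"
  define U where "U k = map (\<lambda>j. (k, j)) [0..<nn k]" for k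
  define mk where "mk x = (\<exists>r<length (case_prod v x). voff nn v (fst x) (snd x) + r \<in> M)" for x
  define cnt where "cnt xs = length (filter mk xs)" for xs
  note TP = assms(6)[unfolded threshold_props_def]
  have phi_lt: "\<phi> i j < n" if "i < n" "j < nn i" for i j
    using TP that unfolding Iset_def by auto
  have cnt_concat: "cnt (concat xss) = sum_list (map cnt xss)" for xss
    unfolding cnt_def by (induction xss) auto
  have F2: "H (U k) = concat (map (\<lambda>j. U (\<phi> k j)) [0..<nn k])" for k
    unfolding H_def U_def by (simp add: hmor_def comp_def Let_def)
  have F3: "(H ^^ Suc s) (U k) = concat (map (\<lambda>j. (H ^^ s) (U (\<phi> k j))) [0..<nn k])" for s k
  proof -
    have "(H ^^ Suc s) (U k) = (H ^^ s) (H (U k))" by (simp only: funpow_Suc_right o_apply)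
    also have "\<dots> = concat (map (H ^^ s) (map (\<lambda>j. U (\<phi> k j)) [0..<nn k]))"
      unfolding F2 unfolding H_def by (rule funpow_concat)
    finally show ?thesis by (simp add: comp_def)
  qed
  have cntS: "cnt ((H ^^ Suc s) (U k)) = sum_list (map (\<lambda>j. cnt ((H ^^ s) (U (\<phi> k j)))) [0..<nn k])" for s k
    unfolding F3 cnt_concat by (simp add: comp_def)
  have cntU: "1 \<le> cnt (U k)" if "j < nn k" "mk (k, j)" for j k
  proof -
    have "(k, j) \<in> set (filter mk (U k))" using that unfolding U_def by auto
    then show ?thesis unfolding cnt_def by (cases "filter mk (U k)") auto
  qed
  have D: "\<exists>j<nn k. \<exists>r'<length (v k j). r = voff_in_u v k j + r'"
    if "r < length (ufac nn v k)" for k r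
  proof -
    have "r < length (concat (map (v k) [0..<nn k]))" using that unfolding ufac_def .
    from concat_pos[OF this] obtain j r' where "j < nn k" "r' < length (v k j)"
      "r = length (concat (take j (map (v k) [0..<nn k]))) + r'" by auto
    then show ?thesis unfolding voff_in_u_def by (auto simp: take_map)
  qed
  have Dm: "\<exists>j<nn k. mk (k, j) \<and> (\<exists>r'<length (v k j). r = voff_in_u v k j + r')"
    if "r < length (ufac nn v k)" "uoff nn v k + r \<in> M" for k r
  proof -
    from D[OF that(1)] obtain j r' where "j < nn k" "r' < length (v k j)" "r = voff_in_u v k j + r'" by blast
    then show ?thesis using that(2) unfolding mk_def voff_def by (auto simp: add.assoc)
  qed
  have step3: "\<exists>j'<nn (\<phi> k j). mk (\<phi> k j, j')" if "k < n" "j < nn k" "mk (k, j)" for k j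
  proof -
    have "(k, j) \<in> Iset n nn" using that unfolding Iset_def by auto
    moreover have "\<exists>r < length (v k j). voff nn v k j + r \<in> M" using that(3) unfolding mk_def by simp
    ultimately have "\<exists>r < length (ufac nn v (\<phi> k j)). uoff nn v (\<phi> k j) + r \<in> M"
      using TP by blast
    then show ?thesis using Dm by blast
  qed
  have A: "\<forall>k. k < n \<longrightarrow> (\<exists>j<nn k. mk (k, j)) \<longrightarrow> 1 \<le> cnt ((H ^^ s) (U k))" for s
  proof (induction s)
    case 0 then show ?case using cntU by auto
  next
    case (Suc s)
    show ?case
    proof (intro allI impI)
      fix k assume k: "k < n" "\<exists>j<nn k. mk (k, j)"
      then obtain j where j: "j < nn k" "mk (k, j)" by blast
      have "1 \<le> cnt ((H ^^ s) (U (\<phi> k j)))" using Suc phi_lt[OF k(1) j(1)] step3[OF k(1) j] by blast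
      also have "\<dots> \<le> cnt ((H ^^ Suc s) (U k))" unfolding cntS
        by (rule sum_one_le[where g = "\<lambda>j. cnt ((H ^^ s) (U (\<phi> k j)))", OF j(1)])
      finally show "1 \<le> cnt ((H ^^ Suc s) (U k))" .
    qed
  qed
  obtain a b where ab: "(a, b) \<in> Iset n nn" "\<phi> a b = a"
    and r: "\<exists>r < length (ufac nn v a). uoff nn v a + r \<in> M \<and>
            (r < voff_in_u v a b \<or> voff_in_u v a b + length (v a b) \<le> r)"
    using TP by blast
  have a: "a < n" "b < nn a" using ab unfolding Iset_def by auto
  obtain j' where j': "j' < nn a" "j' \<noteq> b" "mk (a, j')"
  proof -
    from r obtain r where r: "r < length (ufac nn v a)" "uoff nn v a + r \<in> M"
      "r < voff_in_u v a b \<or> voff_in_u v a b + length (v a b) \<le> r" by blast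
    from Dm[OF r(1,2)] obtain j where "j < nn a" "mk (a, j)" "\<exists>r'<length (v a j). r = voff_in_u v a j + r'"
      by blast
    moreover have "j \<noteq> b" using calculation(3) r(3) by auto
    ultimately show ?thesis using that by blast
  qed
  have B: "s + 1 \<le> cnt ((H ^^ s) (U a))" for s
  proof (induction s)
    case 0 then show ?case using cntU[OF j'(1,3)] by simp
  next
    case (Suc s)
    have "1 \<le> cnt ((H ^^ s) (U (\<phi> a j')))"
      using A phi_lt[OF a(1) j'(1)] step3[OF a(1) j'(1,3)] by blast
    then have "Suc s + 1 \<le> cnt ((H ^^ s) (U (\<phi> a b))) + cnt ((H ^^ s) (U (\<phi> a j')))"
      using Suc ab(2) by simp
    also have "\<dots> \<le> cnt ((H ^^ Suc s) (U a))" unfolding cntS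
      by (rule sum_two_le[where g = "\<lambda>j. cnt ((H ^^ s) (U (\<phi> a j)))", OF a(2) j'(1)]) (use j' in auto)
    finally show ?case .
  qed
  have X: "Xword n nn = concat (map U [0..<n])" unfolding Xword_def U_def by simp
  have "cnt ((H ^^ t) (U a)) \<le> cnt (hpow n nn \<phi> t)"
  proof -
    have "hpow n nn \<phi> t = concat (map (H ^^ t) (map U [0..<n]))"
      unfolding hpow_def X H_def[symmetric] unfolding H_def by (rule funpow_concat)
    then have "cnt (hpow n nn \<phi> t) = sum_list (map (\<lambda>i. cnt ((H ^^ t) (U i))) [0..<n])"
      by (simp add: cnt_concat comp_def)
    then show ?thesis using sum_one_le[where g = "\<lambda>i. cnt ((H ^^ t) (U i))", OF a(1)] by simp
  qed
  also have "cnt (hpow n nn \<phi> t) \<le> card (marked_iter n nn v \<phi> M t)"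
    unfolding cnt_def marked_iter_def Let_def mk_def
    by (rule card_ge[where g = "case_prod v" and Q = "\<lambda>x r. voff nn v (fst x) (snd x) + r \<in> M"])
  finally show ?thesis using B[of t] by simp
qed

end
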